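(* Suppose the assumptions on $F$, $\xi$ and $\pi$ below hold and fix $\varepsilon,\sigma>0$. Define, for $m\in\mathcal P(\mathcal X)$ and $x\in\mathcal X$, $$a(m,x):=\frac{\delta F}{\delta\mu}(m,x)+2\sigma\Big(K_\varepsilon*\frac{K_\varepsilon*m}{\pi}\Big)(x)-2\sigma\int_{\mathcal X}\Big(K_\varepsilon*\frac{K_\varepsilon*m}{\pi}\Big)(z)\,m(dz)$$ (the drift of the Fisher–Rao gradient flow of $V^\sigma_\varepsilon(m)=F(m)+\sigma\chi^2(K_\varepsilon*m\,|\,\pi)$, where $\chi^2(p|\pi)=\int(p/\pi-1)^2\pi\,dx$). Then there exist constants $M_a,L_a>0$ such that $|a(m,x)|\le M_a$ and $|a(m,x)-a(m',y)|\le L_a(|x-y|+\mathcal W_2(m,m'))$ for all $x,y\in\mathcal X$ and $m,m'\in\mathcal P_2(\mathcal X)$.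
   Context: $\mathcal X\subset\mathbb R^d$ is compact; $\mathcal W_p$ is the $p$-Wasserstein distance. Flat derivative: $F:\mathcal P(\mathcal X)\to\mathbb R$ admits a flat derivative $\frac{\delta F}{\delta\mu}:\mathcal P(\mathcal X)\times\mathcal X\to\mathbb R$ if it is continuous in the measure argument, suitably bounded, and $F(m')-F(m)=\int_0^1\int_{\mathcal X}\frac{\delta F}{\delta\mu}(m+\lambda(m'-m),x)(m'-m)(dx)\,d\lambda$ for all $m,m'$. Assumption on $F$: $F$ is lower semicontinuous w.r.t. weak convergence, bounded below by some $F_{\min}$, admits a flat derivative with $|\frac{\delta F}{\delta\mu}(\mu,x)|\le C_F$ and $|\frac{\delta F}{\delta\mu}(\mu,x)-\frac{\delta F}{\delta\mu}(\nu,y)|\le L_F(\mathcal W_2(\mu,\nu)+|x-y|)$ for all $\mu,\nu,x,y$. Assumption on the kernel: $\xi:\mathbb R^d\to\mathbb R_+$ is a smooth, Lipschitz, radial probability density with full support and finite second moment; $\xi_\varepsilon(z):=C_{\varepsilon,d}^{-1}\varepsilon^{-d}\xi(z/\varepsilon)$ where $C_{\varepsilon,d}=\int_{\mathcal X}\varepsilon^{-d}\xi(x/\varepsilon)dx$; $K_\varepsilon:=\xi_\varepsilon*\xi_\varepsilon$. For a measure $\mu$ on $\mathcal X$, $(K_\varepsilon*\mu)(x)=\int_{\mathcal X}K_\varepsilon(x-y)\mu(dy)$, and for a function $f$ on $\mathcal X$, $(K_\varepsilon*f)(x)=\int_{\mathcal X}K_\varepsilon(x-y)f(y)dy$. Assumption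 on $\pi$: $\pi$ is a probability density on $\mathcal X$, $\pi=e^{-U}$ with $U:\mathcal X\to\mathbb R$ continuous, and $\pi$ is Lipschitz on $\mathcal X$. *)

theory Defs
  imports "HOL-Analysis.Analysis" "HOL-Probability.Probability"
begin

fun Ck :: "nat \<Rightarrow> ('a::euclidean_space \<Rightarrow> real) \<Rightarrow> bool" where
  "Ck 0 f = continuous_on UNIV f"
| "Ck (Suc n) f = (\<exists>f'. (\<forall>x. (f has_derivative f' x) (at x)) \<and> (\<forall>v. Ck n (\<lambda>x. f' x v)))"

definition smooth_fun :: "('a::euclidean_space \<Rightarrow> real) \<Rightarrow> bool" where
  "smooth_fun f \<longleftrightarrow> (\<forall>n. Ck n f)"

text \<open>P(X): Borel probability measures on the ambient space concentrated on X.\<close>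
definition probs_on :: "'a::euclidean_space set \<Rightarrow> 'a measure set" where
  "probs_on X = {m. prob_space m \<and> sets m = sets borel \<and> emeasure m X = 1}"

definition couplings :: "'a::euclidean_space measure \<Rightarrow> 'a measure \<Rightarrow> ('a \<times> 'a) measure set" where
  "couplings \<mu> \<nu> = {\<gamma>. prob_space \<gamma> \<and> sets \<gamma> = sets (borel :: ('a \<times> 'a) measure)
      \<and> distr \<gamma> borel fst = \<mu> \<and> distr \<gamma> borel snd = \<nu>}"

definition W2 :: "'a::euclidean_space measure \<Rightarrow> 'a measure \<Rightarrow> real" where
  "W2 \<mu> \<nu> = sqrt (enn2real (INF \<gamma>\<in>couplings \<mu> \<nu>.
       \<integral>\<^sup>+ p. ennreal ((norm (fst p - snd p))\<^sup>2) \<partial>\<gamma>))"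

definition weak_conv :: "(nat \<Rightarrow> 'a::euclidean_space measure) \<Rightarrow> 'a measure \<Rightarrow> bool" where
  "weak_conv mn m \<longleftrightarrow> (\<forall>f :: 'a \<Rightarrow> real. continuous_on UNIV f \<and> bounded (range f) \<longrightarrow>
       (\<lambda>n. \<integral>x. f x \<partial>(mn n)) \<longlonglongrightarrow> (\<integral>x. f x \<partial>m))"

text \<open>The measure m + l (m' - m) = (1 - l) m + l m'.\<close>
definition mix :: "real \<Rightarrow> 'a::euclidean_space measure \<Rightarrow> 'a measure \<Rightarrow> 'a measure" where
  "mix l m m' = measure_of UNIV (sets borel)
     (\<lambda>A. ennreal (1 - l) * emeasure m A + ennreal l * emeasure m' A)"

definition assm_F :: "'a::euclidean_space set \<Rightarrow> ('a measure \<Rightarrow> real) \<Rightarrow> ('a measure \<Rightarrow> 'a \<Rightarrow> real)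
    \<Rightarrow> bool" where
  "assm_F X F dF \<longleftrightarrow>
     \<comment> \<open>lower semicontinuity w.r.t. weak convergence\<close>
     (\<forall>mn m. (\<forall>n. mn n \<in> probs_on X) \<and> m \<in> probs_on X \<and> weak_conv mn m \<longrightarrow>
         ereal (F m) \<le> liminf (\<lambda>n. ereal (F (mn n))))
     \<comment> \<open>bounded below\<close>
   \<and> (\<exists>Fmin. \<forall>m\<in>probs_on X. Fmin \<le> F m)
     \<comment> \<open>flat derivative: continuity in the measure argument\<close>
   \<and> (\<forall>mn m x. (\<forall>n. mn n \<in> probs_on X) \<and> m \<in> probs_on X \<and> x \<in> X \<and> weak_conv mn m \<longrightarrow>
         (\<lambda>n. dF (mn n) x) \<longlonglongrightarrow> dF m x)
     \<comment> \<open>flat derivative: defining identity\<close>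
   \<and> (\<forall>m\<in>probs_on X. \<forall>m'\<in>probs_on X.
         ((\<lambda>l. (\<integral>x. dF (mix l m m') x \<partial>m') - (\<integral>x. dF (mix l m m') x \<partial>m))
            has_integral (F m' - F m)) {0..1})
     \<comment> \<open>boundedness and Lipschitz bounds\<close>
   \<and> (\<exists>CF LF. (\<forall>m\<in>probs_on X. \<forall>x\<in>X. \<bar>dF m x\<bar> \<le> CF)
        \<and> (\<forall>m\<in>probs_on X. \<forall>m'\<in>probs_on X. \<forall>x\<in>X. \<forall>y\<in>X.
              \<bar>dF m x - dF m' y\<bar> \<le> LF * (W2 m m' + norm (x - y))))"

definition assm_xi :: "('a::euclidean_space \<Rightarrow> real) \<Rightarrow> bool" where
  "assm_xi \<xi> \<longleftrightarrow>
     smooth_fun \<xi> \<and> (\<exists>L. lipschitz_on L UNIV \<xi>)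
   \<and> (\<forall>x y. norm x = norm y \<longrightarrow> \<xi> x = \<xi> y)
   \<and> (\<forall>x. 0 \<le> \<xi> x) \<and> integrable lborel \<xi> \<and> (\<integral>x. \<xi> x \<partial>lborel) = 1
   \<and> closure {x. \<xi> x \<noteq> 0} = UNIV
   \<and> integrable lborel (\<lambda>z. (norm z)\<^sup>2 * \<xi> z)"

definition C_eps :: "'a::euclidean_space set \<Rightarrow> ('a \<Rightarrow> real) \<Rightarrow> real \<Rightarrow> real" where
  "C_eps X \<xi> \<epsilon> = (LINT x:X|lborel. \<epsilon> powi (- int DIM('a)) * \<xi> (x /\<^sub>R \<epsilon>))"

definition xi_eps :: "'a::euclidean_space set \<Rightarrow> ('a \<Rightarrow> real) \<Rightarrow> real \<Rightarrow> 'a \<Rightarrow> real" where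
  "xi_eps X \<xi> \<epsilon> z = inverse (C_eps X \<xi> \<epsilon>) * \<epsilon> powi (- int DIM('a)) * \<xi> (z /\<^sub>R \<epsilon>)"

definition K_eps :: "'a::euclidean_space set \<Rightarrow> ('a \<Rightarrow> real) \<Rightarrow> real \<Rightarrow> 'a \<Rightarrow> real" where
  "K_eps X \<xi> \<epsilon> z = (\<integral>w. xi_eps X \<xi> \<epsilon> (z - w) * xi_eps X \<xi> \<epsilon> w \<partial>lborel)"

definition conv_meas :: "('a::euclidean_space \<Rightarrow> real) \<Rightarrow> 'a measure \<Rightarrow> 'a \<Rightarrow> real" where
  "conv_meas K \<mu> x = (\<integral>y. K (x - y) \<partial>\<mu>)"

definition conv_fun :: "'a::euclidean_space set \<Rightarrow> ('a \<Rightarrow> real) \<Rightarrow> ('a \<Rightarrow> real) \<Rightarrow> 'a \<Rightarrow> real" where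
  "conv_fun X K f x = (LINT y:X|lborel. K (x - y) * f y)"

definition assm_pi :: "'a::euclidean_space set \<Rightarrow> ('a \<Rightarrow> real) \<Rightarrow> bool" where
  "assm_pi X \<pi> \<longleftrightarrow>
     (\<exists>U. continuous_on X U \<and> (\<forall>x\<in>X. \<pi> x = exp (- U x)))
   \<and> set_integrable lborel X \<pi> \<and> (LINT x:X|lborel. \<pi> x) = 1
   \<and> (\<exists>L. lipschitz_on L X \<pi>)"

definition drift :: "'a::euclidean_space set \<Rightarrow> ('a measure \<Rightarrow> 'a \<Rightarrow> real) \<Rightarrow> ('a \<Rightarrow> real)
    \<Rightarrow> ('a \<Rightarrow> real) \<Rightarrow> real \<Rightarrow> real \<Rightarrow> 'a measure \<Rightarrow> 'a \<Rightarrow> real" where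
  "drift X dF \<xi> \<pi> \<epsilon> \<sigma> m x =
     (let K = K_eps X \<xi> \<epsilon>;
          g = conv_fun X K (\<lambda>y. conv_meas K m y / \<pi> y)
      in dF m x + 2 * \<sigma> * g x - 2 * \<sigma> * (\<integral>z. g z \<partial>m))"

end

theory Submission
  imports Defs
begin

lemma probs_onD:
  assumes "m \<in> probs_on X"
  shows "prob_space m" "sets m = sets borel" "emeasure m X = 1"
  using assms by (auto simp: probs_on_def)

lemma probs_on_AE:
  assumes "closed X" "m \<in> probs_on X"
  shows "AE x in m. x \<in> X"
proof -
  interpret prob_space m using probs_onD[OF assms(2)] by simp
  have "X \<in> sets m" using probs_onD(2)[OF assms(2)] assms(1) by simp
  moreover have "prob X = 1" using probs_onD(3)[OF assms(2)] by (simp add: measure_def)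
  ultimately show ?thesis using AE_prob_1 by blast
qed

lemma probs_on_meas:
  assumes "m \<in> probs_on X" "h \<in> borel_measurable borel"
  shows "h \<in> borel_measurable m"
  using assms probs_onD(2)[OF assms(1)] measurable_cong_sets by blast

lemma probs_on_int_bdd:
  fixes h :: "'a::euclidean_space \<Rightarrow> real"
  assumes "closed X" "m \<in> probs_on X" "h \<in> borel_measurable borel" "\<forall>x\<in>X. \<bar>h x\<bar> \<le> B"
  shows "integrable m h" "\<bar>\<integral>x. h x \<partial>m\<bar> \<le> B"
proof -
  interpret prob_space m using probs_onD[OF assms(2)] by simp
  have ae: "AE x in m. \<bar>h x\<bar> \<le> B" using probs_on_AE[OF assms(1,2)] assms(4) by auto
  have hm: "h \<in> borel_measurable m" using probs_on_meas assms by blast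
  show i: "integrable m h" using integrable_const_bound[of h B] ae hm by auto
  have "\<bar>\<integral>x. h x \<partial>m\<bar> \<le> (\<integral>x. \<bar>h x\<bar> \<partial>m)" by (rule integral_abs_bound)
  also have "\<dots> \<le> B" using integral_le_const[of "\<lambda>x. \<bar>h x\<bar>" B] i ae by auto
  finally show "\<bar>\<integral>x. h x \<partial>m\<bar> \<le> B" .
qed

lemma coupling_facts:
  fixes X :: "'a::euclidean_space set"
  assumes "closed X" "m \<in> probs_on X" "m' \<in> probs_on X" "\<gamma> \<in> couplings m m'"
  shows "prob_space \<gamma>" "fst \<in> measurable \<gamma> borel" "snd \<in> measurable \<gamma> borel"
    "AE p in \<gamma>. fst p \<in> X \<and> snd p \<in> X"
    "\<And>h::'a \<Rightarrow> real. h \<in> borel_measurable borel \<Longrightarrow> (\<integral>x. h x \<partial>m) = (\<integral>p. h (fst p) \<partial>\<gamma>)"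
    "\<And>h::'a \<Rightarrow> real. h \<in> borel_measurable borel \<Longrightarrow> (\<integral>x. h x \<partial>m') = (\<integral>p. h (snd p) \<partial>\<gamma>)"
proof -
  have g: "prob_space \<gamma>" "sets \<gamma> = sets (borel :: ('a \<times> 'a) measure)" "distr \<gamma> borel fst = m" "distr \<gamma> borel snd = m'"
    using assms(4) unfolding couplings_def by simp_all
  show "prob_space \<gamma>" by (rule g(1))
  have f0: "fst \<in> measurable (borel :: ('a \<times> 'a) measure) borel"
    using measurable_fst[of "borel :: 'a measure" "borel :: 'a measure"] by (simp only: borel_prod)
  have s0: "snd \<in> measurable (borel :: ('a \<times> 'a) measure) borel"
    using measurable_snd[of "borel :: 'a measure" "borel :: 'a measure"] by (simp only: borel_prod)
  show f: "fst \<in> measurable \<gamma> borel" using f0 by (simp only: measurable_cong_sets[OF g(2) refl])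
  show s: "snd \<in> measurable \<gamma> borel" using s0 by (simp only: measurable_cong_sets[OF g(2) refl])
  have Xm: "{x \<in> space borel. x \<in> X} \<in> sets borel" using assms(1) by simp
  have "AE x in distr \<gamma> borel fst. x \<in> X" unfolding g(3) by (rule probs_on_AE[OF assms(1,2)])
  hence 1: "AE p in \<gamma>. fst p \<in> X" by (simp only: AE_distr_iff[OF f Xm])
  have "AE x in distr \<gamma> borel snd. x \<in> X" unfolding g(4) by (rule probs_on_AE[OF assms(1,3)])
  hence 2: "AE p in \<gamma>. snd p \<in> X" by (simp only: AE_distr_iff[OF s Xm])
  show "AE p in \<gamma>. fst p \<in> X \<and> snd p \<in> X" using 1 2 by (rule AE_conjI)
  show "(\<integral>x. h x \<partial>m) = (\<integral>p. h (fst p) \<partial>\<gamma>)" if h: "h \<in> borel_measurable borel" for h :: "'a \<Rightarrow> real"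
  proof -
    have "(\<integral>x. h x \<partial>m) = integral\<^sup>L (distr \<gamma> borel fst) h" by (simp only: g(3))
    also have "\<dots> = (\<integral>p. h (fst p) \<partial>\<gamma>)" by (rule integral_distr[OF f h])
    finally show ?thesis .
  qed
  show "(\<integral>x. h x \<partial>m') = (\<integral>p. h (snd p) \<partial>\<gamma>)" if h: "h \<in> borel_measurable borel" for h :: "'a \<Rightarrow> real"
  proof -
    have "(\<integral>x. h x \<partial>m') = integral\<^sup>L (distr \<gamma> borel snd) h" by (simp only: g(4))
    also have "\<dots> = (\<integral>p. h (snd p) \<partial>\<gamma>)" by (rule integral_distr[OF s h])
    finally show ?thesis .
  qed
qed

lemma prod_coupling:
  fixes X :: "'a::euclidean_space set"
  assumes "m \<in> probs_on X" "m' \<in> probs_on X"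
  shows "m \<Otimes>\<^sub>M m' \<in> couplings m m'"
proof -
  interpret p: pair_prob_space m m'
    using probs_onD[OF assms(1)] probs_onD[OF assms(2)]
    by (simp add: pair_prob_space_def pair_sigma_finite_def prob_space_imp_sigma_finite)
  have s: "sets (m \<Otimes>\<^sub>M m') = sets (borel :: ('a \<times> 'a) measure)"
    using probs_onD(2)[OF assms(1)] probs_onD(2)[OF assms(2)]
    by (metis borel_prod sets_pair_measure_cong)
  have "distr (m \<Otimes>\<^sub>M m') borel fst = distr (m \<Otimes>\<^sub>M m') m fst"
    by (rule distr_cong) (auto simp: probs_onD(2)[OF assms(1)])
  also have "\<dots> = m" by (rule p.M2.distr_pair_fst)
  finally have 1: "distr (m \<Otimes>\<^sub>M m') borel fst = m" .
  have "distr (m \<Otimes>\<^sub>M m') borel snd = distr (m \<Otimes>\<^sub>M m') m' snd"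
    by (rule distr_cong) (auto simp: probs_onD(2)[OF assms(2)])
  also have "\<dots> = m'"
  proof (rule measure_eqI)
    show "sets (distr (m \<Otimes>\<^sub>M m') m' snd) = sets m'" by simp
    fix A assume A: "A \<in> sets (distr (m \<Otimes>\<^sub>M m') m' snd)"
    hence A': "A \<in> sets m'" by simp
    have "snd -` A \<inter> space (m \<Otimes>\<^sub>M m') = space m \<times> A"
      using sets.sets_into_space[OF A'] by (auto simp: space_pair_measure)
    hence "emeasure (distr (m \<Otimes>\<^sub>M m') m' snd) A = emeasure (m \<Otimes>\<^sub>M m') (space m \<times> A)"
      using A' by (simp add: emeasure_distr)
    also have "\<dots> = emeasure m (space m) * emeasure m' A"
      by (rule p.M2.emeasure_pair_measure_Times[OF sets.top A'])
    finally show "emeasure (distr (m \<Otimes>\<^sub>M m') m' snd) A = emeasure m' A"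
      by (simp add: p.M1.emeasure_space_1)
  qed
  finally show ?thesis using 1 s p.prob_space_axioms by (simp add: couplings_def)
qed


lemma W2_lip:
  fixes X :: "'a::euclidean_space set" and h :: "'a \<Rightarrow> real"
  assumes "compact X" "m \<in> probs_on X" "m' \<in> probs_on X" "h \<in> borel_measurable borel"
    "\<forall>x\<in>X. \<forall>y\<in>X. \<bar>h x - h y\<bar> \<le> L * norm (x - y)" "L \<ge> 0"
  shows "\<bar>(\<integral>x. h x \<partial>m) - (\<integral>x. h x \<partial>m')\<bar> \<le> L * W2 m m'"
proof -
  have cl: "closed X" using assms(1) compact_imp_closed by blast
  obtain R where R: "\<forall>x\<in>X. norm x \<le> R"
    using compact_imp_bounded[OF assms(1)] bounded_iff by blast
  have "X \<noteq> {}" using probs_onD(3)[OF assms(2)] by auto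
  then obtain x1 where x1: "x1 \<in> X" by blast
  define B where "B = \<bar>h x1\<bar> + L * (R + R)"
  have hb: "\<forall>x\<in>X. \<bar>h x\<bar> \<le> B"
  proof
    fix x assume x: "x \<in> X"
    have "norm x \<le> R" "norm x1 \<le> R" using R x x1 by auto
    hence "norm (x - x1) \<le> R + R" using norm_triangle_ineq4[of x x1] by linarith
    hence "L * norm (x - x1) \<le> L * (R + R)" using assms(6) by (simp add: mult_left_mono)
    moreover have "\<bar>h x - h x1\<bar> \<le> L * norm (x - x1)" using assms(5) x x1 by blast
    ultimately show "\<bar>h x\<bar> \<le> B" unfolding B_def by linarith
  qed
  define diff where "diff = (\<integral>x. h x \<partial>m) - (\<integral>x. h x \<partial>m')"
  have key: "diff\<^sup>2 \<le> L\<^sup>2 * enn2real (\<integral>\<^sup>+ p. ennreal ((norm (fst p - snd p))\<^sup>2) \<partial>\<gamma>)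
      \<and> (\<integral>\<^sup>+ p. ennreal ((norm (fst p - snd p))\<^sup>2) \<partial>\<gamma>) < \<top>"
    if g: "\<gamma> \<in> couplings m m'" for \<gamma>
  proof -
    note cf = coupling_facts[OF cl assms(2,3) g]
    interpret prob_space \<gamma> by (rule cf(1))
    have [measurable]: "fst \<in> measurable \<gamma> borel" "snd \<in> measurable \<gamma> borel" "h \<in> borel_measurable borel"
      using cf assms(4) by auto
    have ae: "AE p in \<gamma>. fst p \<in> X \<and> snd p \<in> X" by (rule cf(4))
    have i1: "integrable \<gamma> (\<lambda>p. h (fst p))"
      by (rule integrable_const_bound[where B=B]) (use ae hb in auto)
    have i2: "integrable \<gamma> (\<lambda>p. h (snd p))"
      by (rule integrable_const_bound[where B=B]) (use ae hb in auto)
    have Db: "norm (fst p - snd p) \<le> R + R" if "fst p \<in> X \<and> snd p \<in> X" for p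
    proof -
      have "norm (fst p) \<le> R" "norm (snd p) \<le> R" using R that by auto
      thus ?thesis using norm_triangle_ineq4[of "fst p" "snd p"] by linarith
    qed
    have Db2: "(norm (fst p - snd p))\<^sup>2 \<le> (R + R)\<^sup>2" if "fst p \<in> X \<and> snd p \<in> X" for p
      by (rule power_mono[OF Db[OF that] norm_ge_zero])
    have iD: "integrable \<gamma> (\<lambda>p. norm (fst p - snd p))"
      by (rule integrable_const_bound[where B="R+R"]) (use ae Db in auto)
    have iD2: "integrable \<gamma> (\<lambda>p. (norm (fst p - snd p))\<^sup>2)"
      by (rule integrable_const_bound[where B="(R+R)\<^sup>2"]) (use ae Db2 in auto)
    have "diff = (\<integral>p. h (fst p) \<partial>\<gamma>) - (\<integral>p. h (snd p) \<partial>\<gamma>)"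
      unfolding diff_def using cf(5)[OF assms(4)] cf(6)[OF assms(4)] by simp
    also have "\<dots> = (\<integral>p. h (fst p) - h (snd p) \<partial>\<gamma>)"
      using i1 i2 by simp
    finally have d1: "diff = (\<integral>p. h (fst p) - h (snd p) \<partial>\<gamma>)" .
    have "\<bar>diff\<bar> \<le> (\<integral>p. \<bar>h (fst p) - h (snd p)\<bar> \<partial>\<gamma>)"
      unfolding d1 by (rule integral_abs_bound)
    also have "\<dots> \<le> (\<integral>p. L * norm (fst p - snd p) \<partial>\<gamma>)"
      by (rule integral_mono_AE) (use i1 i2 iD ae assms(5) in auto)
    also have "\<dots> = L * (\<integral>p. norm (fst p - snd p) \<partial>\<gamma>)" by simp
    finally have d2: "\<bar>diff\<bar> \<le> L * (\<integral>p. norm (fst p - snd p) \<partial>\<gamma>)" .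
    have Dnn: "0 \<le> (\<integral>p. norm (fst p - snd p) \<partial>\<gamma>)" by simp
    have cs: "(\<integral>p. norm (fst p - snd p) \<partial>\<gamma>)\<^sup>2 \<le> (\<integral>p. (norm (fst p - snd p))\<^sup>2 \<partial>\<gamma>)"
      using variance_eq[OF iD iD2] variance_positive[of "\<lambda>p. norm (fst p - snd p)"] by simp
    have "diff\<^sup>2 = \<bar>diff\<bar>\<^sup>2" by simp
    also have "\<dots> \<le> (L * (\<integral>p. norm (fst p - snd p) \<partial>\<gamma>))\<^sup>2"
      using power_mono[OF d2 abs_ge_zero, of 2] by simp
    also have "\<dots> = L\<^sup>2 * (\<integral>p. norm (fst p - snd p) \<partial>\<gamma>)\<^sup>2" by (simp add: power_mult_distrib)
    also have "\<dots> \<le> L\<^sup>2 * (\<integral>p. (norm (fst p - snd p))\<^sup>2 \<partial>\<gamma>)"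
      using cs by (simp add: mult_left_mono)
    finally have d3: "diff\<^sup>2 \<le> L\<^sup>2 * (\<integral>p. (norm (fst p - snd p))\<^sup>2 \<partial>\<gamma>)" .
    have nn: "(\<integral>\<^sup>+ p. ennreal ((norm (fst p - snd p))\<^sup>2) \<partial>\<gamma>) = ennreal (\<integral>p. (norm (fst p - snd p))\<^sup>2 \<partial>\<gamma>)"
      by (rule nn_integral_eq_integral[OF iD2]) auto
    show ?thesis using d3 unfolding nn by simp
  qed
  define I where "I = (INF \<gamma>\<in>couplings m m'. \<integral>\<^sup>+ p. ennreal ((norm (fst p - snd p))\<^sup>2) \<partial>\<gamma>)"
  have W: "W2 m m' = sqrt (enn2real I)" unfolding W2_def I_def by simp
  have g0: "m \<Otimes>\<^sub>M m' \<in> couplings m m'" by (rule prod_coupling[OF assms(2,3)])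
  have I0: "I \<le> (\<integral>\<^sup>+ p. ennreal ((norm (fst p - snd p))\<^sup>2) \<partial>(m \<Otimes>\<^sub>M m'))"
    unfolding I_def by (rule INF_lower[OF g0])
  have Ifin: "I < \<top>" using I0 conjunct2[OF key[OF g0]] by (rule order.strict_trans1)
  show ?thesis
  proof (cases "L = 0")
    case True
    hence "diff\<^sup>2 \<le> 0" using key[OF g0] by simp
    hence "diff = 0" by simp
    thus ?thesis unfolding diff_def using True by simp
  next
    case False
    hence Lp: "L > 0" using assms(6) by simp
    have "ennreal (diff\<^sup>2 / L\<^sup>2) \<le> I" unfolding I_def
    proof (rule INF_greatest)
      fix \<gamma> assume g: "\<gamma> \<in> couplings m m'"
      let ?N = "\<integral>\<^sup>+ p. ennreal ((norm (fst p - snd p))\<^sup>2) \<partial>\<gamma>"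
      have "diff\<^sup>2 / L\<^sup>2 \<le> enn2real ?N" using key[OF g] Lp by (simp add: divide_le_eq mult.commute)
      hence "ennreal (diff\<^sup>2 / L\<^sup>2) \<le> ennreal (enn2real ?N)" by (rule ennreal_leI)
      also have "\<dots> = ?N"
      proof -
        have fin: "?N \<noteq> \<top>" using key[OF g] by auto
        thus ?thesis by (simp add: ennreal_enn2real_if)
      qed
      finally show "ennreal (diff\<^sup>2 / L\<^sup>2) \<le> ?N" .
    qed
    hence "enn2real (ennreal (diff\<^sup>2 / L\<^sup>2)) \<le> enn2real I" by (rule enn2real_mono[OF _ Ifin])
    hence "diff\<^sup>2 / L\<^sup>2 \<le> enn2real I" by simp
    hence "sqrt (diff\<^sup>2 / L\<^sup>2) \<le> sqrt (enn2real I)" by (rule real_sqrt_le_mono)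
    hence "\<bar>diff\<bar> / L \<le> W2 m m'" unfolding W using Lp by (simp add: real_sqrt_divide)
    thus ?thesis unfolding diff_def using Lp by (simp add: divide_le_eq mult.commute)
  qed
qed


lemma lip_nonneg_integrable_bounded:
  fixes f :: "'a::euclidean_space \<Rightarrow> real"
  assumes nn: "\<forall>x. 0 \<le> f x" and lip: "lipschitz_on L UNIV f" and int: "integrable lborel f"
  shows "\<exists>B. \<forall>x. f x \<le> B"
proof -
  define L' where "L' = max L 0 + 1"
  have L'p: "L' > 0" unfolding L'_def by simp
  have lip': "\<bar>f x - f y\<bar> \<le> L' * norm (x - y)" for x y
  proof -
    have "dist (f x) (f y) \<le> L * dist x y" using lipschitz_onD[OF lip] by simp
    moreover have "L * dist x y \<le> L' * dist x y" unfolding L'_def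
      by (intro mult_right_mono) auto
    ultimately show ?thesis by (simp add: dist_real_def dist_norm)
  qed
  define d where "d = real DIM('a)"
  have dp: "d > 0" unfolding d_def by simp
  define r where "r = 1 / (L' * d)"
  have rp: "r > 0" unfolding r_def using L'p dp by simp
  define c where "c = (2 * r) ^ DIM('a)"
  have cp: "c > 0" unfolding c_def using rp by simp
  show ?thesis
  proof (intro exI[of _ "1 + integral\<^sup>L lborel f / c"] allI)
    fix x0 :: 'a
    define A where "A = cbox (x0 - r *\<^sub>R One) (x0 + r *\<^sub>R One)"
    have near: "f x0 - 1 \<le> f y" if y: "y \<in> A" for y
    proof -
      have comp: "\<bar>(y - x0) \<bullet> b\<bar> \<le> r" if b: "b \<in> Basis" for b
        using y b unfolding A_def mem_box by (auto simp: inner_diff_left algebra_simps)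
      have "norm (y - x0) \<le> (\<Sum>b\<in>Basis. \<bar>(y - x0) \<bullet> b\<bar>)" by (rule norm_le_l1)
      also have "\<dots> \<le> (\<Sum>b\<in>(Basis::'a set). r)" by (rule sum_mono) (use comp in auto)
      also have "\<dots> = d * r" unfolding d_def by simp
      finally have "L' * norm (y - x0) \<le> L' * (d * r)" using L'p by simp
      also have "\<dots> = 1" unfolding r_def using L'p dp by simp
      finally show ?thesis using lip'[of y x0] by linarith
    qed
    have Ameas: "measure lborel A = c"
      unfolding A_def c_def using rp
      by (simp add: measure_lborel_cbox_eq inner_diff_left inner_add_left algebra_simps prod_constant)
    have Afin: "emeasure lborel A < \<infinity>" unfolding A_def by (rule emeasure_bounded_finite[OF bounded_cbox])
    have iA: "integrable lborel (\<lambda>y. (f x0 - 1) * indicator A y)"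
      using Afin unfolding A_def by simp
    have I1: "(\<integral>y. (f x0 - 1) * indicator A y \<partial>lborel) \<le> (\<integral>y. f y \<partial>lborel)"
      by (rule integral_mono[OF iA int]) (use near nn in \<open>auto simp: indicator_def\<close>)
    have I2: "(\<integral>y. (f x0 - 1) * indicator A y \<partial>lborel) = (f x0 - 1) * c"
      using Afin Ameas unfolding A_def by simp
    have "(f x0 - 1) * c \<le> integral\<^sup>L lborel f" using I1 unfolding I2 .
    thus "f x0 \<le> 1 + integral\<^sup>L lborel f / c" using cp by (simp add: field_simps)
  qed
qed


lemma scaled_integrable:
  fixes \<xi> :: "'a::euclidean_space \<Rightarrow> real"
  assumes int: "integrable lborel \<xi>" and cont: "continuous_on UNIV \<xi>" and ep: "\<epsilon> > 0"
  shows "integrable lborel (\<lambda>z. \<xi> (z /\<^sub>R \<epsilon>))"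
proof -
  define c0 where "c0 = \<bar>inverse \<epsilon>\<bar> ^ DIM('a)"
  have c0p: "c0 > 0" unfolding c0_def using ep by simp
  define T where "T = (\<lambda>x::'a. 0 + inverse \<epsilon> *\<^sub>R x)"
  have eq: "lborel = density (distr lborel borel T) (\<lambda>_. c0)"
    unfolding T_def c0_def by (rule lborel_affine) (use ep in simp)
  have xm: "\<xi> \<in> borel_measurable borel" by (rule borel_measurable_continuous_onI[OF cont])
  have Tm: "T \<in> measurable lborel borel" unfolding T_def by simp
  from int have "integrable (density (distr lborel borel T) (\<lambda>_. c0)) \<xi>"
    by (subst (asm) eq)
  hence "integrable (distr lborel borel T) (\<lambda>x. c0 *\<^sub>R \<xi> x)"
    by (subst (asm) integrable_density) (use xm c0p in auto)
  hence "integrable lborel (\<lambda>x. c0 *\<^sub>R \<xi> (T x))"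
    by (subst (asm) integrable_distr_eq[OF Tm]) (use xm in auto)
  hence "integrable lborel (\<lambda>x. inverse c0 * (c0 * \<xi> (T x)))"
    by (intro integrable_mult_right) simp
  thus ?thesis using c0p unfolding T_def by simp
qed

lemma K_lip:
  fixes \<xi> :: "'a::euclidean_space \<Rightarrow> real" and X :: "'a set"
  assumes xi: "assm_xi \<xi>" and ep: "\<epsilon> > 0"
  shows "\<exists>LK\<ge>0. \<forall>z z'. \<bar>K_eps X \<xi> \<epsilon> z - K_eps X \<xi> \<epsilon> z'\<bar> \<le> LK * norm (z - z')"
proof -
  obtain L where lip: "lipschitz_on L UNIV \<xi>" using xi unfolding assm_xi_def by blast
  have nn: "\<forall>x. 0 \<le> \<xi> x" using xi unfolding assm_xi_def by blast
  have int: "integrable lborel \<xi>" using xi unfolding assm_xi_def by blast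
  obtain B where B: "\<forall>x. \<xi> x \<le> B" using lip_nonneg_integrable_bounded[OF nn lip int] by blast
  have cont: "continuous_on UNIV \<xi>" by (rule lipschitz_on_continuous_on[OF lip])
  define L' where "L' = max L 0"
  have L'nn: "L' \<ge> 0" unfolding L'_def by simp
  have lip': "\<bar>\<xi> x - \<xi> y\<bar> \<le> L' * norm (x - y)" for x y
  proof -
    have "dist (\<xi> x) (\<xi> y) \<le> L * dist x y" using lipschitz_onD[OF lip] by simp
    moreover have "L * dist x y \<le> L' * dist x y" unfolding L'_def
      by (intro mult_right_mono) auto
    ultimately show ?thesis by (simp add: dist_real_def dist_norm)
  qed
  define \<psi> where "\<psi> z = \<xi> (z /\<^sub>R \<epsilon>)" for z
  define cc where "cc = inverse (C_eps X \<xi> \<epsilon>) * \<epsilon> powi (- int DIM('a))"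
  have xe: "xi_eps X \<xi> \<epsilon> z = cc * \<psi> z" for z unfolding xi_eps_def cc_def \<psi>_def by simp
  have pnn: "0 \<le> \<psi> z" for z unfolding \<psi>_def using nn by simp
  have pB: "\<psi> z \<le> B" for z unfolding \<psi>_def using B by simp
  have plip: "\<bar>\<psi> z - \<psi> z'\<bar> \<le> (L' / \<epsilon>) * norm (z - z')" for z z'
  proof -
    have "\<bar>\<psi> z - \<psi> z'\<bar> \<le> L' * norm (z /\<^sub>R \<epsilon> - z' /\<^sub>R \<epsilon>)" unfolding \<psi>_def by (rule lip')
    also have "norm (z /\<^sub>R \<epsilon> - z' /\<^sub>R \<epsilon>) = norm (z - z') / \<epsilon>"
    proof -
      have e: "z /\<^sub>R \<epsilon> - z' /\<^sub>R \<epsilon> = (z - z') /\<^sub>R \<epsilon>" by (simp add: scaleR_diff_right)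
      show ?thesis unfolding e norm_scaleR using ep by (simp add: field_simps)
    qed
    finally show ?thesis by simp
  qed
  have pcont: "continuous_on UNIV \<psi>" unfolding \<psi>_def
    by (rule continuous_on_compose2[OF cont]) (auto intro!: continuous_intros)
  have pm: "\<psi> \<in> borel_measurable borel" by (rule borel_measurable_continuous_onI[OF pcont])
  have pint: "integrable lborel \<psi>" unfolding \<psi>_def by (rule scaled_integrable[OF int cont ep])
  have pzm: "(\<lambda>w. \<psi> (z - w) * \<psi> w) \<in> borel_measurable borel" for z
  proof -
    have "continuous_on UNIV (\<lambda>w. \<psi> (z - w))"
      by (rule continuous_on_compose2[OF pcont]) (auto intro!: continuous_intros)
    hence "(\<lambda>w. \<psi> (z - w)) \<in> borel_measurable borel" by (rule borel_measurable_continuous_onI)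
    thus ?thesis using pm by measurable
  qed
  have pzint: "integrable lborel (\<lambda>w. \<psi> (z - w) * \<psi> w)" for z
  proof (rule Bochner_Integration.integrable_bound[of lborel "\<lambda>w. B * \<psi> w"])
    show "integrable lborel (\<lambda>w. B * \<psi> w)" using pint by simp
    show "(\<lambda>w. \<psi> (z - w) * \<psi> w) \<in> borel_measurable lborel" using pzm[of z] by simp
    show "AE w in lborel. norm (\<psi> (z - w) * \<psi> w) \<le> norm (B * \<psi> w)"
    proof (rule AE_I2)
      fix w
      have "\<psi> (z - w) * \<psi> w \<le> B * \<psi> w" using pB[of "z - w"] pnn[of w] by (rule mult_right_mono)
      moreover have "0 \<le> \<psi> (z - w) * \<psi> w" using pnn by simp
      ultimately show "norm (\<psi> (z - w) * \<psi> w) \<le> norm (B * \<psi> w)" by simp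
    qed
  qed
  have Keq: "K_eps X \<xi> \<epsilon> z = cc\<^sup>2 * (\<integral>w. \<psi> (z - w) * \<psi> w \<partial>lborel)" for z
  proof -
    have "K_eps X \<xi> \<epsilon> z = (\<integral>w. cc\<^sup>2 * (\<psi> (z - w) * \<psi> w) \<partial>lborel)"
      unfolding K_eps_def xe by (simp add: power2_eq_square algebra_simps)
    thus ?thesis by simp
  qed
  define LK where "LK = cc\<^sup>2 * (L' / \<epsilon>) * (\<integral>w. \<psi> w \<partial>lborel)"
  have LKnn: "LK \<ge> 0" unfolding LK_def using L'nn ep pnn by (simp add: integral_nonneg_AE)
  show ?thesis
  proof (intro exI[of _ LK] conjI allI LKnn)
    fix z z'
    have "(\<integral>w. \<psi> (z - w) * \<psi> w \<partial>lborel) - (\<integral>w. \<psi> (z' - w) * \<psi> w \<partial>lborel)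
        = (\<integral>w. \<psi> (z - w) * \<psi> w - \<psi> (z' - w) * \<psi> w \<partial>lborel)"
      using pzint[of z] pzint[of z'] by simp
    also have "\<bar>\<dots>\<bar> \<le> (\<integral>w. \<bar>\<psi> (z - w) * \<psi> w - \<psi> (z' - w) * \<psi> w\<bar> \<partial>lborel)"
      by (rule integral_abs_bound)
    also have "\<dots> \<le> (\<integral>w. ((L' / \<epsilon>) * norm (z - z')) * \<psi> w \<partial>lborel)"
    proof (rule integral_mono)
      show "integrable lborel (\<lambda>w. \<bar>\<psi> (z - w) * \<psi> w - \<psi> (z' - w) * \<psi> w\<bar>)"
        using pzint[of z] pzint[of z'] by simp
      show "integrable lborel (\<lambda>w. ((L' / \<epsilon>) * norm (z - z')) * \<psi> w)" using pint by simp
      fix w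
      have "\<bar>\<psi> (z - w) * \<psi> w - \<psi> (z' - w) * \<psi> w\<bar> = \<bar>\<psi> (z - w) - \<psi> (z' - w)\<bar> * \<psi> w"
        using pnn[of w] by (simp add: left_diff_distrib[symmetric] abs_mult)
      also have "\<dots> \<le> ((L' / \<epsilon>) * norm (z - z')) * \<psi> w"
        using plip[of "z - w" "z' - w"] pnn[of w] by (intro mult_right_mono) auto
      finally show "\<bar>\<psi> (z - w) * \<psi> w - \<psi> (z' - w) * \<psi> w\<bar> \<le> ((L' / \<epsilon>) * norm (z - z')) * \<psi> w" .
    qed
    also have "\<dots> = (L' / \<epsilon>) * norm (z - z') * (\<integral>w. \<psi> w \<partial>lborel)" by simp
    finally have k: "\<bar>(\<integral>w. \<psi> (z - w) * \<psi> w \<partial>lborel) - (\<integral>w. \<psi> (z' - w) * \<psi> w \<partial>lborel)\<bar>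
        \<le> (L' / \<epsilon>) * norm (z - z') * (\<integral>w. \<psi> w \<partial>lborel)" .
    have "\<bar>K_eps X \<xi> \<epsilon> z - K_eps X \<xi> \<epsilon> z'\<bar>
       = cc\<^sup>2 * \<bar>(\<integral>w. \<psi> (z - w) * \<psi> w \<partial>lborel) - (\<integral>w. \<psi> (z' - w) * \<psi> w \<partial>lborel)\<bar>"
      unfolding Keq by (simp add: right_diff_distrib[symmetric] abs_mult)
    also have "\<dots> \<le> cc\<^sup>2 * ((L' / \<epsilon>) * norm (z - z') * (\<integral>w. \<psi> w \<partial>lborel))"
      using k by (intro mult_left_mono) auto
    also have "\<dots> = LK * norm (z - z')" unfolding LK_def by simp
    finally show "\<bar>K_eps X \<xi> \<epsilon> z - K_eps X \<xi> \<epsilon> z'\<bar> \<le> LK * norm (z - z')" .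
  qed
qed


lemma set_bound:
  fixes X :: "'a::euclidean_space set" and \<phi> :: "'a \<Rightarrow> real"
  assumes "compact X" "continuous_on X \<phi>" "\<forall>y\<in>X. \<bar>\<phi> y\<bar> \<le> C"
  shows "set_integrable lborel X \<phi>" "\<bar>LINT y:X|lborel. \<phi> y\<bar> \<le> C * measure lborel X"
proof -
  have Xs: "X \<in> sets borel" using compact_imp_closed[OF assms(1)] by (rule borel_closed)
  have fin: "emeasure lborel X < \<infinity>" using emeasure_compact_finite[OF assms(1)] by simp
  have m: "(\<lambda>y. indicator X y *\<^sub>R \<phi> y) \<in> borel_measurable borel"
    by (rule borel_measurable_continuous_on_indicator[OF Xs assms(2)])
  show i: "set_integrable lborel X \<phi>" unfolding set_integrable_def
    by (rule integrableI_bounded_set[where A=X and B=C]) (use Xs fin m assms(3) in auto)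
  have ic: "integrable lborel (\<lambda>y. C * indicator X y)" using fin Xs by simp
  have "\<bar>LINT y:X|lborel. \<phi> y\<bar> \<le> (\<integral>y. \<bar>indicator X y *\<^sub>R \<phi> y\<bar> \<partial>lborel)"
    unfolding set_lebesgue_integral_def by (rule integral_abs_bound)
  also have "\<dots> \<le> (\<integral>y. C * indicator X y \<partial>lborel)"
    by (rule integral_mono) (use i ic assms(3) in \<open>auto simp: set_integrable_def indicator_def\<close>)
  also have "\<dots> = C * measure lborel X" using fin Xs by simp
  finally show "\<bar>LINT y:X|lborel. \<phi> y\<bar> \<le> C * measure lborel X" .
qed


theorem mainTheorem7:
  fixes X :: "'a::euclidean_space set"
    and F :: "'a measure \<Rightarrow> real" and dF :: "'a measure \<Rightarrow> 'a \<Rightarrow> real"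
    and \<xi> \<pi> :: "'a \<Rightarrow> real" and \<epsilon> \<sigma> :: real
  assumes "compact X"
    and "assm_F X F dF"
    and "assm_xi \<xi>"
    and "assm_pi X \<pi>"
    and "\<epsilon> > 0" and "\<sigma> > 0"
  shows "\<exists>Ma>0. \<exists>La>0.
           (\<forall>m\<in>probs_on X. \<forall>x\<in>X. \<bar>drift X dF \<xi> \<pi> \<epsilon> \<sigma> m x\<bar> \<le> Ma)
         \<and> (\<forall>m\<in>probs_on X. \<forall>m'\<in>probs_on X. \<forall>x\<in>X. \<forall>y\<in>X.
              \<bar>drift X dF \<xi> \<pi> \<epsilon> \<sigma> m x - drift X dF \<xi> \<pi> \<epsilon> \<sigma> m' y\<bar>
                \<le> La * (norm (x - y) + W2 m m'))"
proof -
  have cl: "closed X" using assms(1) compact_imp_closed by blast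
  obtain R0 where R0: "\<forall>x\<in>X. norm x \<le> R0"
    using compact_imp_bounded[OF assms(1)] bounded_iff by blast
  define R where "R = max R0 0"
  have R: "\<forall>x\<in>X. norm x \<le> R" "R \<ge> 0" unfolding R_def using R0 by (auto simp: le_max_iff_disj)
  have W2nn: "W2 m m' \<ge> 0" for m m' unfolding W2_def by simp
  define K where "K = K_eps X \<xi> \<epsilon>"
  obtain LK where LK: "LK \<ge> 0" "\<And>z z'. \<bar>K z - K z'\<bar> \<le> LK * norm (z - z')"
    using K_lip[OF assms(3,5), of X] unfolding K_def by blast
  have "lipschitz_on LK UNIV K"
    using LK by (auto simp: lipschitz_on_def dist_real_def dist_norm)
  hence Kcont: "continuous_on UNIV K" by (rule lipschitz_on_continuous_on)
  have Kc: "continuous_on A (\<lambda>u. K (y - u))" for A y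
  proof -
    have "continuous_on UNIV (\<lambda>u. K (y - u))"
      by (rule continuous_on_compose2[OF Kcont]) (auto intro!: continuous_intros)
    thus ?thesis using continuous_on_subset by blast
  qed
  have Km: "(\<lambda>u. K (y - u)) \<in> borel_measurable borel" for y
    by (rule borel_measurable_continuous_onI[OF Kc])
  have Kgrow: "\<bar>K z\<bar> \<le> \<bar>K 0\<bar> + LK * norm z" for z
    using LK(2)[of z 0] by simp
  define BK where "BK = \<bar>K 0\<bar> + LK * (R + R)"
  have BKnn: "BK \<ge> 0" unfolding BK_def using LK R by simp
  have nXX: "norm (x - y) \<le> R + R" if "x \<in> X" "y \<in> X" for x y
  proof -
    have "norm x \<le> R" "norm y \<le> R" using R that by auto
    thus ?thesis using norm_triangle_ineq4[of x y] by linarith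
  qed
  have KB: "\<bar>K (x - y)\<bar> \<le> BK" if "x \<in> X" "y \<in> X" for x y
  proof -
    have "LK * norm (x - y) \<le> LK * (R + R)" using nXX[OF that] LK(1) by (rule mult_left_mono)
    thus ?thesis using Kgrow[of "x - y"] unfolding BK_def by linarith
  qed
  have KB2: "\<bar>K (x - y)\<bar> \<le> \<bar>K 0\<bar> + LK * (norm x + R)" if "y \<in> X" for x y
  proof -
    have "norm (x - y) \<le> norm x + R" using R that norm_triangle_ineq4[of x y] by force
    hence "LK * norm (x - y) \<le> LK * (norm x + R)" using LK(1) by (rule mult_left_mono)
    thus ?thesis using Kgrow[of "x - y"] by linarith
  qed
  obtain U where U: "continuous_on X U" "\<forall>x\<in>X. \<pi> x = exp (- U x)"
    using assms(4) unfolding assm_pi_def by blast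
  obtain BU where BU: "\<forall>x\<in>X. \<bar>U x\<bar> \<le> BU"
  proof -
    have "compact (U ` X)" by (rule compact_continuous_image[OF U(1) assms(1)])
    then obtain a where "\<forall>y\<in>U ` X. norm y \<le> a" using compact_imp_bounded bounded_iff by blast
    thus ?thesis using that by auto
  qed
  define pmin where "pmin = exp (- BU)"
  have pminp: "pmin > 0" unfolding pmin_def by simp
  have pmin: "pmin \<le> \<pi> y" if "y \<in> X" for y
    unfolding pmin_def using U(2) BU that by auto
  have picont: "continuous_on X \<pi>"
  proof -
    have "continuous_on X (\<lambda>x. exp (- U x))" by (intro continuous_intros U(1))
    thus ?thesis using continuous_on_cong[of X X \<pi> "\<lambda>x. exp (- U x)"] U(2) by auto
  qed
  define lX where "lX = measure lborel X"
  have lXnn: "lX \<ge> 0" unfolding lX_def by simp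
  define Bf where "Bf = BK / pmin"
  have Bfnn: "Bf \<ge> 0" unfolding Bf_def using BKnn pminp by simp

  define cm where "cm m y = conv_meas K m y" for m y
  have cm_bd: "\<bar>cm m y\<bar> \<le> BK" if "m \<in> probs_on X" "y \<in> X" for m y
    unfolding cm_def conv_meas_def
    by (rule probs_on_int_bdd(2)[OF cl that(1) Km]) (use KB that(2) in auto)
  have cm_int: "integrable m (\<lambda>u. K (y - u))" if "m \<in> probs_on X" for m y
    by (rule probs_on_int_bdd(1)[OF cl that(1) Km, where B="\<bar>K 0\<bar> + LK * (norm y + R)"])
       (use KB2 in auto)
  have cm_lip: "\<bar>cm m y - cm m y'\<bar> \<le> LK * norm (y - y')" if "m \<in> probs_on X" for m y y'
  proof -
    have "cm m y - cm m y' = (\<integral>u. K (y - u) - K (y' - u) \<partial>m)"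
      unfolding cm_def conv_meas_def using cm_int[OF that, of y] cm_int[OF that, of y'] by simp
    also have "\<bar>\<dots>\<bar> \<le> LK * norm (y - y')"
    proof (rule probs_on_int_bdd(2)[OF cl that])
      show "(\<lambda>u. K (y - u) - K (y' - u)) \<in> borel_measurable borel" using Km by measurable
      show "\<forall>u\<in>X. \<bar>K (y - u) - K (y' - u)\<bar> \<le> LK * norm (y - y')"
      proof
        fix u show "\<bar>K (y - u) - K (y' - u)\<bar> \<le> LK * norm (y - y')" using LK(2)[of "y - u" "y' - u"] by simp
      qed
    qed
    finally show ?thesis .
  qed
  have cm_cont: "continuous_on A (cm m)" if "m \<in> probs_on X" for m A
  proof -
    have "lipschitz_on LK UNIV (cm m)"
      using cm_lip[OF that] LK(1) by (auto simp: lipschitz_on_def dist_real_def dist_norm)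
    hence "continuous_on UNIV (cm m)" by (rule lipschitz_on_continuous_on)
    thus ?thesis using continuous_on_subset by blast
  qed
  have cm_W: "\<bar>cm m y - cm m' y\<bar> \<le> LK * W2 m m'"
    if "m \<in> probs_on X" "m' \<in> probs_on X" "y \<in> X" for m m' y
    unfolding cm_def conv_meas_def
  proof (rule W2_lip[OF assms(1) that(1,2) Km _ LK(1)])
    show "\<forall>x\<in>X. \<forall>z\<in>X. \<bar>K (y - x) - K (y - z)\<bar> \<le> LK * norm (x - z)"
    proof (intro ballI)
      fix x z
      have "norm ((y - x) - (y - z)) = norm (x - z)" by (simp add: norm_minus_commute)
      thus "\<bar>K (y - x) - K (y - z)\<bar> \<le> LK * norm (x - z)" using LK(2)[of "y - x" "y - z"] by simp
    qed
  qed

  define f where "f m y = cm m y / \<pi> y" for m y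
  have f_bd: "\<bar>f m y\<bar> \<le> Bf" if "m \<in> probs_on X" "y \<in> X" for m y
  proof -
    have "\<bar>f m y\<bar> = \<bar>cm m y\<bar> / \<pi> y" unfolding f_def using pmin[OF that(2)] pminp by simp
    also have "\<dots> \<le> BK / pmin" by (rule frac_le) (use BKnn cm_bd[OF that] pminp pmin[OF that(2)] in auto)
    finally show ?thesis unfolding Bf_def .
  qed
  have f_W: "\<bar>f m y - f m' y\<bar> \<le> (LK / pmin) * W2 m m'"
    if "m \<in> probs_on X" "m' \<in> probs_on X" "y \<in> X" for m m' y
  proof -
    have "\<bar>f m y - f m' y\<bar> = \<bar>cm m y - cm m' y\<bar> / \<pi> y"
      unfolding f_def using pmin[OF that(3)] pminp by (simp add: diff_divide_distrib[symmetric])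
    also have "\<dots> \<le> (LK * W2 m m') / pmin"
      by (rule frac_le) (use LK(1) W2nn cm_W[OF that] pminp pmin[OF that(3)] in auto)
    finally show ?thesis by simp
  qed
  have f_cont: "continuous_on X (f m)" if "m \<in> probs_on X" for m
  proof -
    have "continuous_on X (\<lambda>y. cm m y / \<pi> y)"
      by (rule continuous_on_divide[OF cm_cont[OF that] picont]) (use pmin pminp in force)
    thus ?thesis unfolding f_def by simp
  qed

  define g where "g m x = conv_fun X K (f m) x" for m x
  have g_eq: "g m x = (LINT y:X|lborel. K (x - y) * f m y)" for m x
    unfolding g_def conv_fun_def by simp
  have phi_cont: "continuous_on X (\<lambda>y. K (x - y) * f m y)" if "m \<in> probs_on X" for m x
    by (rule continuous_on_mult[OF Kc f_cont[OF that]])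
  have g_si: "set_integrable lborel X (\<lambda>y. K (x - y) * f m y)" if "m \<in> probs_on X" for m x
  proof (rule set_bound(1)[OF assms(1) phi_cont[OF that], where C="(\<bar>K 0\<bar> + LK * (norm x + R)) * Bf"])
    show "\<forall>y\<in>X. \<bar>K (x - y) * f m y\<bar> \<le> (\<bar>K 0\<bar> + LK * (norm x + R)) * Bf"
    proof
      fix y assume y: "y \<in> X"
      have a: "\<bar>K (x - y)\<bar> \<le> \<bar>K 0\<bar> + LK * (norm x + R)" by (rule KB2[OF y])
      have b: "\<bar>f m y\<bar> \<le> Bf" by (rule f_bd[OF that y])
      show "\<bar>K (x - y) * f m y\<bar> \<le> (\<bar>K 0\<bar> + LK * (norm x + R)) * Bf"
        unfolding abs_mult by (rule mult_mono[OF a b order_trans[OF abs_ge_zero a] abs_ge_zero])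
    qed
  qed
  define Bg where "Bg = BK * Bf * lX"
  define Lg where "Lg = LK * Bf * lX"
  define Cg where "Cg = BK * (LK / pmin) * lX"
  have Bgnn: "Bg \<ge> 0" "Lg \<ge> 0" "Cg \<ge> 0" unfolding Bg_def Lg_def Cg_def
    using BKnn Bfnn lXnn LK(1) pminp by auto
  have g_bd: "\<bar>g m x\<bar> \<le> Bg" if "m \<in> probs_on X" "x \<in> X" for m x
    unfolding g_eq lX_def Bg_def
    by (rule set_bound(2)[OF assms(1) phi_cont[OF that(1)]])
       (use KB[OF that(2)] f_bd[OF that(1)] BKnn in \<open>auto simp: abs_mult intro!: mult_mono\<close>)
  have g_lip: "\<bar>g m x - g m x'\<bar> \<le> Lg * norm (x - x')" if "m \<in> probs_on X" for m x x'
  proof -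
    have "g m x - g m x' = (LINT y:X|lborel. K (x - y) * f m y - K (x' - y) * f m y)"
      unfolding g_eq by (rule set_integral_diff(2)[OF g_si[OF that] g_si[OF that], symmetric])
    also have "\<bar>\<dots>\<bar> \<le> (LK * norm (x - x') * Bf) * lX" unfolding lX_def
    proof (rule set_bound(2)[OF assms(1)])
      show "continuous_on X (\<lambda>y. K (x - y) * f m y - K (x' - y) * f m y)"
        by (intro continuous_on_diff phi_cont[OF that])
      show "\<forall>y\<in>X. \<bar>K (x - y) * f m y - K (x' - y) * f m y\<bar> \<le> LK * norm (x - x') * Bf"
      proof
        fix y assume y: "y \<in> X"
        have "\<bar>K (x - y) * f m y - K (x' - y) * f m y\<bar> = \<bar>K (x - y) - K (x' - y)\<bar> * \<bar>f m y\<bar>"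
          by (simp add: left_diff_distrib[symmetric] abs_mult)
        also have "\<dots> \<le> (LK * norm (x - x')) * Bf"
          using LK(2)[of "x - y" "x' - y"] f_bd[OF that y] LK(1)
          by (intro mult_mono) auto
        finally show "\<bar>K (x - y) * f m y - K (x' - y) * f m y\<bar> \<le> LK * norm (x - x') * Bf" .
      qed
    qed
    finally show ?thesis unfolding Lg_def by (simp add: algebra_simps)
  qed
  have g_m: "g m \<in> borel_measurable borel" if "m \<in> probs_on X" for m
  proof -
    have "lipschitz_on Lg UNIV (g m)"
      using g_lip[OF that] Bgnn by (auto simp: lipschitz_on_def dist_real_def dist_norm)
    hence "continuous_on UNIV (g m)" by (rule lipschitz_on_continuous_on)
    thus ?thesis by (rule borel_measurable_continuous_onI)
  qed
  have g_W: "\<bar>g m x - g m' x\<bar> \<le> Cg * W2 m m'"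
    if "m \<in> probs_on X" "m' \<in> probs_on X" "x \<in> X" for m m' x
  proof -
    have "g m x - g m' x = (LINT y:X|lborel. K (x - y) * f m y - K (x - y) * f m' y)"
      unfolding g_eq by (rule set_integral_diff(2)[OF g_si[OF that(1)] g_si[OF that(2)], symmetric])
    also have "\<bar>\<dots>\<bar> \<le> (BK * ((LK / pmin) * W2 m m')) * lX" unfolding lX_def
    proof (rule set_bound(2)[OF assms(1)])
      show "continuous_on X (\<lambda>y. K (x - y) * f m y - K (x - y) * f m' y)"
        by (intro continuous_on_diff phi_cont that)
      show "\<forall>y\<in>X. \<bar>K (x - y) * f m y - K (x - y) * f m' y\<bar> \<le> BK * ((LK / pmin) * W2 m m')"
      proof
        fix y assume y: "y \<in> X"
        have "\<bar>K (x - y) * f m y - K (x - y) * f m' y\<bar> = \<bar>K (x - y)\<bar> * \<bar>f m y - f m' y\<bar>"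
          by (simp add: right_diff_distrib[symmetric] abs_mult)
        also have "\<dots> \<le> BK * ((LK / pmin) * W2 m m')"
          using KB[OF that(3) y] f_W[OF that(1,2) y] BKnn by (intro mult_mono) auto
        finally show "\<bar>K (x - y) * f m y - K (x - y) * f m' y\<bar> \<le> BK * ((LK / pmin) * W2 m m')" .
      qed
    qed
    finally show ?thesis unfolding Cg_def by (simp add: algebra_simps)
  qed
  have Ig_int: "integrable m (g m')" if "m \<in> probs_on X" "m' \<in> probs_on X" for m m'
    by (rule probs_on_int_bdd(1)[OF cl that(1) g_m[OF that(2)]]) (use g_bd[OF that(2)] in auto)
  have Ig_bd: "\<bar>\<integral>z. g m z \<partial>m\<bar> \<le> Bg" if "m \<in> probs_on X" for m
    by (rule probs_on_int_bdd(2)[OF cl that g_m[OF that]]) (use g_bd[OF that] in auto)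
  have Ig_W: "\<bar>(\<integral>z. g m z \<partial>m) - (\<integral>z. g m' z \<partial>m')\<bar> \<le> Cg * W2 m m' + Lg * W2 m m'"
    if "m \<in> probs_on X" "m' \<in> probs_on X" for m m'
  proof -
    have e: "(\<integral>z. g m z \<partial>m) - (\<integral>z. g m' z \<partial>m')
        = (\<integral>z. g m z - g m' z \<partial>m) + ((\<integral>z. g m' z \<partial>m) - (\<integral>z. g m' z \<partial>m'))"
      using Ig_int[OF that(1) that(1)] Ig_int[OF that(1) that(2)] by simp
    have a: "\<bar>\<integral>z. g m z - g m' z \<partial>m\<bar> \<le> Cg * W2 m m'"
    proof (rule probs_on_int_bdd(2)[OF cl that(1)])
      show "(\<lambda>z. g m z - g m' z) \<in> borel_measurable borel" using g_m[OF that(1)] g_m[OF that(2)] by measurable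
      show "\<forall>z\<in>X. \<bar>g m z - g m' z\<bar> \<le> Cg * W2 m m'" using g_W[OF that] by auto
    qed
    have b: "\<bar>(\<integral>z. g m' z \<partial>m) - (\<integral>z. g m' z \<partial>m')\<bar> \<le> Lg * W2 m m'"
      by (rule W2_lip[OF assms(1) that g_m[OF that(2)] _ Bgnn(2)]) (use g_lip[OF that(2)] in auto)
    show ?thesis unfolding e using a b by linarith
  qed
  have drift_eq: "drift X dF \<xi> \<pi> \<epsilon> \<sigma> m x = dF m x + 2 * \<sigma> * g m x - 2 * \<sigma> * (\<integral>z. g m z \<partial>m)" for m x
    unfolding drift_def Let_def g_def f_def cm_def K_def by simp
  have "\<exists>CF LF. (\<forall>m\<in>probs_on X. \<forall>x\<in>X. \<bar>dF m x\<bar> \<le> CF)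
        \<and> (\<forall>m\<in>probs_on X. \<forall>m'\<in>probs_on X. \<forall>x\<in>X. \<forall>y\<in>X.
              \<bar>dF m x - dF m' y\<bar> \<le> LF * (W2 m m' + norm (x - y)))"
    using assms(2) unfolding assm_F_def by blast
  then obtain CF LF where CF: "\<forall>m\<in>probs_on X. \<forall>x\<in>X. \<bar>dF m x\<bar> \<le> CF"
    and LF: "\<forall>m\<in>probs_on X. \<forall>m'\<in>probs_on X. \<forall>x\<in>X. \<forall>y\<in>X.
              \<bar>dF m x - dF m' y\<bar> \<le> LF * (W2 m m' + norm (x - y))" by blast
  define Ma where "Ma = \<bar>CF\<bar> + 4 * \<sigma> * Bg + 1"
  define La where "La = \<bar>LF\<bar> + 4 * \<sigma> * (Lg + Cg) + 1"
  have "0 \<le> 4 * \<sigma> * Bg" using Bgnn(1) assms(6) by simp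
  hence Map: "Ma > 0" unfolding Ma_def using abs_ge_zero[of CF] by linarith
  have "0 \<le> 4 * \<sigma> * (Lg + Cg)" using Bgnn(2,3) assms(6) by simp
  hence Lap: "La > 0" unfolding La_def using abs_ge_zero[of LF] by linarith
  have bound1: "\<bar>drift X dF \<xi> \<pi> \<epsilon> \<sigma> m x\<bar> \<le> Ma" if "m \<in> probs_on X" "x \<in> X" for m x
  proof -
    have a: "\<bar>dF m x\<bar> \<le> \<bar>CF\<bar>" using CF that by force
    have b: "\<bar>2 * \<sigma> * g m x\<bar> \<le> 2 * \<sigma> * Bg"
      using mult_left_mono[OF g_bd[OF that], of "2 * \<sigma>"] assms(6) by (simp add: abs_mult)
    have c: "\<bar>2 * \<sigma> * (\<integral>z. g m z \<partial>m)\<bar> \<le> 2 * \<sigma> * Bg"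
      using mult_left_mono[OF Ig_bd[OF that(1)], of "2 * \<sigma>"] assms(6) by (simp add: abs_mult)
    show ?thesis unfolding drift_eq Ma_def using a b c
      abs_triangle_ineq[of "dF m x + 2 * \<sigma> * g m x" "- (2 * \<sigma> * (\<integral>z. g m z \<partial>m))"]
      abs_triangle_ineq[of "dF m x" "2 * \<sigma> * g m x"] by simp
  qed
  have bound2: "\<bar>drift X dF \<xi> \<pi> \<epsilon> \<sigma> m x - drift X dF \<xi> \<pi> \<epsilon> \<sigma> m' y\<bar> \<le> La * (norm (x - y) + W2 m m')"
    if m: "m \<in> probs_on X" "m' \<in> probs_on X" and xy: "x \<in> X" "y \<in> X" for m m' x y
  proof -
    define n where "n = norm (x - y)"
    define W where "W = W2 m m'"
    define d1 where "d1 = dF m x - dF m' y"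
    define gg where "gg = g m x - g m' y"
    define ii where "ii = (\<integral>z. g m z \<partial>m) - (\<integral>z. g m' z \<partial>m')"
    have h1: "\<bar>d1\<bar> \<le> LF * (W + n)" unfolding d1_def W_def n_def using LF m xy by blast
    have "\<bar>gg\<bar> \<le> \<bar>g m x - g m y\<bar> + \<bar>g m y - g m' y\<bar>" unfolding gg_def by linarith
    hence h2: "\<bar>gg\<bar> \<le> Lg * n + Cg * W" unfolding n_def W_def
      using g_lip[OF m(1), of x y] g_W[OF m xy(2)] by linarith
    have h3: "\<bar>ii\<bar> \<le> Cg * W + Lg * W" unfolding ii_def W_def by (rule Ig_W[OF m])
    have nn: "n \<ge> 0" "W \<ge> 0" unfolding n_def W_def using W2nn by auto
    have e0: "drift X dF \<xi> \<pi> \<epsilon> \<sigma> m x - drift X dF \<xi> \<pi> \<epsilon> \<sigma> m' y = d1 + 2*\<sigma>*gg - 2*\<sigma>*ii"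
      unfolding drift_eq d1_def gg_def ii_def by (simp add: algebra_simps)
    have a: "LF * (W + n) \<le> \<bar>LF\<bar> * (n + W)" using nn by (simp add: add.commute mult_right_mono)
    have b: "\<bar>2*\<sigma>*gg\<bar> \<le> 2*\<sigma>*(Lg*n + Cg*W)"
      using mult_left_mono[OF h2, of "2*\<sigma>"] assms(6) by (simp add: abs_mult)
    have c: "\<bar>2*\<sigma>*ii\<bar> \<le> 2*\<sigma>*(Cg*W + Lg*W)"
      using mult_left_mono[OF h3, of "2*\<sigma>"] assms(6) by (simp add: abs_mult)
    have "0 \<le> \<sigma>*Lg*n" "0 \<le> \<sigma>*Lg*W" "0 \<le> \<sigma>*Cg*n" using assms(6) Bgnn nn by auto
    hence d: "2*\<sigma>*(Lg*n + Cg*W) + 2*\<sigma>*(Cg*W + Lg*W) \<le> 4*\<sigma>*(Lg+Cg)*(n+W)"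
      by (simp add: algebra_simps)
    have e: "La * (n + W) = \<bar>LF\<bar> * (n + W) + 4*\<sigma>*(Lg+Cg)*(n+W) + (n + W)"
      unfolding La_def by (simp add: algebra_simps)
    have "\<bar>d1 + 2*\<sigma>*gg - 2*\<sigma>*ii\<bar> \<le> La * (n + W)"
      unfolding e using h1 a b c d nn abs_triangle_ineq[of "d1 + 2*\<sigma>*gg" "- (2*\<sigma>*ii)"]
        abs_triangle_ineq[of d1 "2*\<sigma>*gg"] by simp
    thus ?thesis unfolding e0 n_def W_def .
  qed
  show ?thesis using Map Lap bound1 bound2 by blast
qed

end
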